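(* Let $\{p_n\}_{n\ge0}$ be a sequence of real polynomials with $\deg p_n=n$, let $c\in\mathbb{R}$, fix $j\in\mathbb{N}\cup\{0\}$, and let $K_n^{(j,j)}(c,c)=\sum_{i=0}^n \big(p_i^{(j)}(c)\big)^2$. Assume there are real constants $a,b$ such that for every integer $k\ge0$, $p_n^{(k)}(c)\approx C_k(-1)^n n^{ak+b}$ as $n\to\infty$, with $C_k\neq0$ independent of $n$ and $2(ak+b)+1>0$. Let $\lambda_n=\gamma n^2+\delta n$ with $\gamma,\delta\in\mathbb{R}$, and define $$\alpha_n=\sum_{i=j+1}^n(\lambda_i-\lambda_{i-1})K_{i-1}^{(j,j)}(c,c),\qquad n\ge j+1.$$ Then $$\lim_{n\to+\infty}\frac{\alpha_n}{n^{2(aj+b)+3}}=\frac{2\gamma C_j^2}{(2(aj+b)+3)(2(aj+b)+1)}\quad\text{if }\gamma\ne0,$$ $$\lim_{n\to+\infty}\frac{\alpha_n}{n^{2(aj+b+1)}}=\frac{\delta C_j^2}{2(aj+b+1)(2(aj+b)+1)}\quad\text{if }\gamma=0.$$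
   Context: The notation $a_n\approx b_n$ means $\lim_{n\to+\infty}a_n/b_n=1$. *)

theory Defs
  imports "HOL-Analysis.Analysis" "HOL-Computational_Algebra.Polynomial" "HOL-Library.Landau_Symbols"
begin

definition Kjj :: "(nat \<Rightarrow> real poly) \<Rightarrow> nat \<Rightarrow> real \<Rightarrow> nat \<Rightarrow> real" where
  "Kjj p j c n = (\<Sum>i=0..n. (poly ((pderiv ^^ j) (p i)) c)^2)"

end

theory Submission
  imports Defs "HOL-Real_Asymp.Real_Asymp"
begin

lemma stolz:
  fixes a b :: "nat \<Rightarrow> real"
  assumes mono: "\<And>n. b n < b (Suc n)" and inf: "filterlim b at_top sequentially"
    and lim: "(\<lambda>n. (a (Suc n) - a n) / (b (Suc n) - b n)) \<longlonglongrightarrow> L"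
  shows "(\<lambda>n. a n / b n) \<longlonglongrightarrow> L"
proof (rule LIMSEQ_I)
  fix e :: real assume e: "e > 0"
  from LIMSEQ_D[OF lim, of "e/2"] e obtain N where
    N: "\<And>n. n \<ge> N \<Longrightarrow> norm ((a (Suc n) - a n) / (b (Suc n) - b n) - L) < e/2" by auto
  have stp: "\<bar>a (Suc n) - a n - L*(b (Suc n) - b n)\<bar> \<le> e/2 * (b (Suc n) - b n)" if "n \<ge> N" for n
  proof -
    have d: "b (Suc n) - b n > 0" using mono[of n] by simp
    have "\<bar>(a (Suc n) - a n) / (b (Suc n) - b n) - L\<bar> < e/2" using N[OF that] by simp
    also have "(a (Suc n) - a n) / (b (Suc n) - b n) - L
       = (a (Suc n) - a n - L*(b (Suc n) - b n)) / (b (Suc n) - b n)" using d by (simp add: field_simps)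
    finally have "\<bar>a (Suc n) - a n - L*(b (Suc n) - b n)\<bar> / (b (Suc n) - b n) < e/2"
      using d by (simp add: abs_div)
    then show ?thesis using d by (simp add: pos_divide_less_eq)
  qed
  have acc: "\<bar>a n - a N - L*(b n - b N)\<bar> \<le> e/2 * (b n - b N)" if "n \<ge> N" for n
    using that
  proof (induction n rule: dec_induct)
    case base then show ?case by simp
  next
    case (step n)
    have "\<bar>a (Suc n) - a N - L*(b (Suc n) - b N)\<bar> \<le> \<bar>a n - a N - L*(b n - b N)\<bar> + \<bar>a (Suc n) - a n - L*(b (Suc n) - b n)\<bar>"
      by (smt (verit, ccfv_threshold) right_diff_distrib)
    also have "\<dots> \<le> e/2 * (b n - b N) + e/2 * (b (Suc n) - b n)"
      using step.IH stp[OF step.hyps(1)] by linarith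
    also have "\<dots> = e/2 * (b (Suc n) - b N)" by (simp add: field_simps)
    finally show ?case .
  qed
  define M where "M = \<bar>a N - L * b N\<bar> + e/2 * \<bar>b N\<bar>"
  have "eventually (\<lambda>n. b n > max 0 (2*M/e)) sequentially"
    using inf filterlim_at_top_dense by blast
  moreover have "eventually (\<lambda>n. n \<ge> N) sequentially" by (rule eventually_ge_at_top)
  ultimately have "eventually (\<lambda>n. b n > max 0 (2*M/e) \<and> n \<ge> N) sequentially"
    by (rule eventually_conj)
  then obtain N' where N': "\<And>n. n \<ge> N' \<Longrightarrow> b n > max 0 (2*M/e) \<and> n \<ge> N"
    unfolding eventually_sequentially by auto
  show "\<exists>no. \<forall>n\<ge>no. norm (a n / b n - L) < e"
  proof (intro exI allI impI)
    fix n assume "n \<ge> N'"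
    from N'[OF this] have bn: "b n > 0" and bM: "2*M/e < b n" and nN: "n \<ge> N" by auto
    define X where "X = a n - a N - L*(b n - b N)"
    define Y where "Y = a N - L * b N"
    have eq: "a n / b n - L = (X + Y) / b n" using bn by (simp add: field_simps X_def Y_def)
    have X: "\<bar>X\<bar> \<le> e/2 * (b n - b N)" using acc[OF nN] by (simp add: X_def)
    have M2: "2*M < e * b n" using bM e by (simp add: pos_divide_less_eq mult.commute)
    have "\<bar>X + Y\<bar> \<le> \<bar>X\<bar> + \<bar>Y\<bar>" by (rule abs_triangle_ineq)
    also have "\<dots> \<le> e/2 * b n - e/2 * b N + \<bar>Y\<bar>" using X by (simp add: algebra_simps)
    also have "\<dots> \<le> e/2 * b n + M"
    proof -
      have "- (e/2 * b N) \<le> e/2 * \<bar>b N\<bar>" using e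
        by (metis abs_ge_minus_self abs_mult abs_of_pos half_gt_zero mult_minus_right)
      then show ?thesis by (simp add: M_def Y_def)
    qed
    also have "\<dots> < e * b n" using M2 by simp
    finally have "\<bar>X + Y\<bar> < e * b n" .
    then have "\<bar>X + Y\<bar> / b n < e" using bn by (simp add: pos_divide_less_eq)
    then show "norm (a n / b n - L) < e" using eq bn by (simp add: abs_div)
  qed
qed

lemma powr_diff_lim:
  fixes t :: real assumes t: "t > 0"
  shows "(\<lambda>n. (real (Suc n) powr t - real n powr t) / real n powr (t - 1)) \<longlonglongrightarrow> t"
proof -
  have "((\<lambda>x::real. x powr t) has_real_derivative t * 1 powr (t - 1)) (at 1)"
    by (rule has_real_derivative_powr) simp
  then have "((\<lambda>h. ((1 + h) powr t - 1 powr t) / h) \<longlongrightarrow> t) (at 0)"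
    by (simp add: DERIV_def)
  moreover have "filterlim (\<lambda>n. 1 / real n) (at 0) sequentially"
  proof (rule tendsto_imp_filterlim_at_right[THEN filterlim_mono])
    show "(\<lambda>n. 1 / real n) \<longlonglongrightarrow> 0" by (rule lim_const_over_n)
    show "\<forall>\<^sub>F n in sequentially. 0 < 1 / real n"
      using eventually_gt_at_top[of "0::nat"] by (auto elim: eventually_mono)
  qed (auto simp: at_eq_sup_left_right)
  ultimately have "((\<lambda>n. ((1 + 1 / real n) powr t - 1 powr t) / (1 / real n)) \<longlongrightarrow> t) sequentially"
    by (rule filterlim_compose)
  then show ?thesis
  proof (rule Lim_transform_eventually)
    show "\<forall>\<^sub>F n in sequentially. ((1 + 1 / real n) powr t - 1 powr t) / (1 / real n) =
      (real (Suc n) powr t - real n powr t) / real n powr (t - 1)"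
      using eventually_gt_at_top[of "0::nat"]
    proof (rule eventually_mono)
      fix n :: nat assume n: "n > 0"
      have "1 + 1 / real n = real (Suc n) / real n" using n by (simp add: field_simps)
      then have "(1 + 1 / real n) powr t = real (Suc n) powr t / real n powr t"
        by (simp add: powr_divide)
      moreover have "real n powr (t - 1) = real n powr t / real n"
        using n by (simp add: powr_diff)
      moreover have "real n powr t > 0" using n by simp
      moreover have "\<And>P Q x::real. P > 0 \<Longrightarrow> x > 0 \<Longrightarrow> (Q / P - 1) / (1 / x) = (Q - P) / (P / x)"
        by (simp add: field_simps)
      ultimately show "((1 + 1 / real n) powr t - 1 powr t) / (1 / real n) =
        (real (Suc n) powr t - real n powr t) / real n powr (t - 1)"
        using n by simp
    qed
  qed
qed

lemma sum_asym:
  fixes A h :: "nat \<Rightarrow> real" and r L :: real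
  assumes r: "r > -1" and diff: "eventually (\<lambda>n. A (Suc n) - A n = h n) sequentially"
    and lim: "(\<lambda>n. h n / real n powr r) \<longlonglongrightarrow> L"
  shows "(\<lambda>n. A n / real n powr (r+1)) \<longlonglongrightarrow> L/(r+1)"
proof (rule stolz)
  show "real n powr (r + 1) < real (Suc n) powr (r + 1)" for n
    using r by (intro powr_less_mono2) auto
  show "filterlim (\<lambda>n. real n powr (r + 1)) at_top sequentially"
    using r by (intro filterlim_compose[OF real_powr_at_top filterlim_real_sequentially]) auto
  have D: "(\<lambda>n. (real (Suc n) powr (r+1) - real n powr (r+1)) / real n powr r) \<longlonglongrightarrow> r + 1"
    using powr_diff_lim[of "r+1"] r by simp
  have "(\<lambda>n. (h n / real n powr r) / ((real (Suc n) powr (r+1) - real n powr (r+1)) / real n powr r))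
     \<longlonglongrightarrow> L / (r+1)"
    using r by (intro tendsto_divide lim D) auto
  then show "(\<lambda>n. (A (Suc n) - A n) / (real (Suc n) powr (r + 1) - real n powr (r + 1))) \<longlonglongrightarrow> L / (r + 1)"
  proof (rule Lim_transform_eventually)
    show "\<forall>\<^sub>F n in sequentially. (h n / real n powr r) / ((real (Suc n) powr (r+1) - real n powr (r+1)) / real n powr r)
      = (A (Suc n) - A n) / (real (Suc n) powr (r + 1) - real n powr (r + 1))"
      using eventually_conj[OF diff eventually_gt_at_top[of "0::nat"]]
      by (rule eventually_mono) auto
  qed
qed

theorem proposition1:
  fixes p :: "nat \<Rightarrow> real poly" and c a b \<gamma> \<delta> :: real and j :: nat and C :: "nat \<Rightarrow> real"
    and lam :: "nat \<Rightarrow> real" and \<alpha> :: "nat \<Rightarrow> real"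
  assumes deg: "\<And>n. degree (p n) = n"
    and asym: "\<And>k. (\<lambda>n. poly ((pderiv ^^ k) (p n)) c) \<sim>[at_top]
                      (\<lambda>n. C k * (-1) ^ n * real n powr (a * real k + b))"
    and Cnz: "\<And>k. C k \<noteq> 0"
    and pos: "\<And>k. 2 * (a * real k + b) + 1 > 0"
    and lam_def: "\<And>n. lam n = \<gamma> * (real n)\<^sup>2 + \<delta> * real n"
    and alpha_def: "\<And>n. \<alpha> n = (\<Sum>i=j+1..n. (lam i - lam (i - 1)) * Kjj p j c (i - 1))"
  shows "(\<gamma> \<noteq> 0 \<longrightarrow>
           (\<lambda>n. \<alpha> n / real n powr (2 * (a * real j + b) + 3)) \<longlonglongrightarrow>
             2 * \<gamma> * (C j)\<^sup>2 / ((2 * (a * real j + b) + 3) * (2 * (a * real j + b) + 1)))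
       \<and> (\<gamma> = 0 \<longrightarrow>
           (\<lambda>n. \<alpha> n / real n powr (2 * (a * real j + b + 1))) \<longlonglongrightarrow>
             \<delta> * (C j)\<^sup>2 / (2 * (a * real j + b + 1) * (2 * (a * real j + b) + 1)))"
  proof -
  define s where "s = 2 * (a * real j + b)"
  have s1: "s + 1 > 0" using pos[of j] by (simp add: s_def)
  define q where "q n = poly ((pderiv ^^ j) (p n)) c" for n
  define g where "g n = C j * (-1) ^ n * real n powr (a * real j + b)" for n
  have ev0: "eventually (\<lambda>n::nat. n > 0) sequentially" by (rule eventually_gt_at_top)
  have qg: "(\<lambda>n. q n / g n) \<longlonglongrightarrow> 1"
  proof (rule asymp_equivD_strong)
    show "q \<sim>[sequentially] g"
      unfolding q_def[abs_def] g_def[abs_def] by (rule asym)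
    show "\<forall>\<^sub>F n in sequentially. q n \<noteq> 0 \<or> g n \<noteq> 0"
      using ev0 by (rule eventually_mono) (simp add: g_def Cnz)
  qed
  have sq: "(\<lambda>n. (q n)^2 / real n powr s) \<longlonglongrightarrow> (C j)^2"
  proof -
    have "(\<lambda>n. (q n / g n)^2 * (C j)^2) \<longlonglongrightarrow> (C j)^2"
      using tendsto_mult[OF tendsto_power[OF qg, of 2] tendsto_const[of "(C j)^2"]] by simp
    then show ?thesis
    proof (rule Lim_transform_eventually)
      show "\<forall>\<^sub>F n in sequentially. (q n / g n)\<^sup>2 * (C j)\<^sup>2 = (q n)\<^sup>2 / real n powr s"
        using ev0
      proof (rule eventually_mono)
        fix n :: nat assume n: "n > 0"
        have "(g n)^2 = (C j)^2 * real n powr s"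
          by (simp add: g_def s_def power_mult_distrib power2_eq_square powr_add[symmetric] algebra_simps)
        then show "(q n / g n)\<^sup>2 * (C j)\<^sup>2 = (q n)\<^sup>2 / real n powr s"
          using n Cnz[of j] by (simp add: power_divide)
      qed
    qed
  qed
  have sq': "(\<lambda>n. (q (Suc n))^2 / real n powr s) \<longlonglongrightarrow> (C j)^2"
  proof -
    have a1: "(\<lambda>n. (q (Suc n))^2 / real (Suc n) powr s) \<longlonglongrightarrow> (C j)^2"
      using sq by (rule LIMSEQ_Suc)
    have a2: "(\<lambda>n. real (Suc n) powr s / real n powr s) \<longlonglongrightarrow> 1" by real_asymp
    have "(\<lambda>n. (q (Suc n))^2 / real (Suc n) powr s * (real (Suc n) powr s / real n powr s)) \<longlonglongrightarrow> (C j)^2"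
      using tendsto_mult[OF a1 a2] by simp
    then show ?thesis
    proof (rule Lim_transform_eventually)
      show "\<forall>\<^sub>F n in sequentially. (q (Suc n))^2 / real (Suc n) powr s * (real (Suc n) powr s / real n powr s)
          = (q (Suc n))^2 / real n powr s"
        using ev0 by (rule eventually_mono) simp
    qed
  qed
  define K where "K n = Kjj p j c n" for n
  have Kdiff: "K (Suc n) - K n = (q (Suc n))^2" for n
    by (simp add: K_def Kjj_def q_def)
  have Klim: "(\<lambda>n. K n / real n powr (s+1)) \<longlonglongrightarrow> (C j)^2 / (s+1)"
    using s1 by (intro sum_asym[OF _ _ sq']) (auto simp: Kdiff)
  have adiff: "\<alpha> (Suc n) - \<alpha> n = (\<gamma> * (2 * real n + 1) + \<delta>) * K n" if "n \<ge> j" for n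
  proof -
    have "lam (Suc n) - lam n = \<gamma> * (2 * real n + 1) + \<delta>"
      by (simp add: lam_def power2_eq_square algebra_simps)
    then show ?thesis using that by (simp add: alpha_def K_def)
  qed
  have evj: "eventually (\<lambda>n. n \<ge> j) sequentially" by (rule eventually_ge_at_top)
  show ?thesis
  proof (intro conjI impI)
    assume g0: "\<gamma> \<noteq> 0"
    have l1: "(\<lambda>n. (\<gamma> * (2 * real n + 1) + \<delta>) / real n) \<longlonglongrightarrow> 2 * \<gamma>" by real_asymp
    have "(\<lambda>n. (\<gamma> * (2 * real n + 1) + \<delta>) / real n * (K n / real n powr (s+1))) \<longlonglongrightarrow> 2 * \<gamma> * ((C j)^2 / (s+1))"
      by (intro tendsto_mult l1 Klim)
    then have h: "(\<lambda>n. (\<gamma> * (2 * real n + 1) + \<delta>) * K n / real n powr (s+2)) \<longlonglongrightarrow> 2 * \<gamma> * ((C j)^2 / (s+1))"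
    proof (rule Lim_transform_eventually)
      show "\<forall>\<^sub>F n in sequentially. (\<gamma> * (2 * real n + 1) + \<delta>) / real n * (K n / real n powr (s+1)) =
         (\<gamma> * (2 * real n + 1) + \<delta>) * K n / real n powr (s+2)"
        using ev0
      proof (rule eventually_mono)
        fix n :: nat assume n: "n > 0"
        have "real n powr (s+2) = real n * real n powr (s+1)"
        proof -
          have "real n powr (s+2) = real n powr (1 + (s+1))" by (simp add: algebra_simps)
          also have "\<dots> = real n powr 1 * real n powr (s+1)" by (rule powr_add)
          finally show ?thesis using n by simp
        qed
        then show "(\<gamma> * (2 * real n + 1) + \<delta>) / real n * (K n / real n powr (s+1)) =
         (\<gamma> * (2 * real n + 1) + \<delta>) * K n / real n powr (s+2)" using n by simp
      qed
    qed
    have "(\<lambda>n. \<alpha> n / real n powr (s+2+1)) \<longlonglongrightarrow> 2 * \<gamma> * ((C j)^2 / (s+1)) / (s+2+1)"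
      using s1 by (intro sum_asym[OF _ _ h]) (auto intro: eventually_mono[OF evj] adiff)
    moreover have "s + 2 + 1 = 2 * (a * real j + b) + 3" by (simp add: s_def)
    moreover have "2 * \<gamma> * ((C j)^2 / (s+1)) / (s+2+1) =
       2 * \<gamma> * (C j)\<^sup>2 / ((2 * (a * real j + b) + 3) * (2 * (a * real j + b) + 1))"
      by (simp add: s_def field_simps)
    ultimately show "(\<lambda>n. \<alpha> n / real n powr (2 * (a * real j + b) + 3)) \<longlonglongrightarrow>
             2 * \<gamma> * (C j)\<^sup>2 / ((2 * (a * real j + b) + 3) * (2 * (a * real j + b) + 1))" by (simp only:)
  next
    assume g0: "\<gamma> = 0"
    have h: "(\<lambda>n. \<delta> * K n / real n powr (s+1)) \<longlonglongrightarrow> \<delta> * ((C j)^2 / (s+1))"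
      using tendsto_mult[OF tendsto_const[of \<delta>] Klim] by simp
    have "(\<lambda>n. \<alpha> n / real n powr (s+1+1)) \<longlonglongrightarrow> \<delta> * ((C j)^2 / (s+1)) / (s+1+1)"
      using s1 by (intro sum_asym[OF _ _ h]) (auto intro: eventually_mono[OF evj] simp: adiff g0)
    moreover have "s + 1 + 1 = 2 * (a * real j + b + 1)" by (simp add: s_def)
    moreover have "\<delta> * ((C j)^2 / (s+1)) / (s+1+1) =
       \<delta> * (C j)\<^sup>2 / (2 * (a * real j + b + 1) * (2 * (a * real j + b) + 1))"
      using s1 by (simp add: s_def field_simps)
    ultimately show "(\<lambda>n. \<alpha> n / real n powr (2 * (a * real j + b + 1))) \<longlonglongrightarrow>
             \<delta> * (C j)\<^sup>2 / (2 * (a * real j + b + 1) * (2 * (a * real j + b) + 1))" by (simp only:)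
  qed
qed

end
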